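(* Let $(\Sigma,\theta)$ be a Noetherian topological space. The map $S$ sending a topology $\tau$ on $\Sigma^*$ to the topology generated by the sets $\uparrow_{\le^*}(UV)$ for $U,V\in\tau$ and $\uparrow_{\le^*}W$ for $W\in\theta$ is a refinement function over $\Sigma^*$.
   Context: $\Sigma^*$ is the set of finite words; $UV$ is concatenation; one-letter words are identified with letters. $\le$ is the specialisation preorder of $\theta$; Higman's ordering $u\le^* w$ holds iff there is a strictly increasing $h$ from positions of $u$ to positions of $w$ with $u_i\le w_{h(i)}$; $\uparrow_{\le^*}$ denotes upward closure. A space is Noetherian if every subset is compact. A refinement function over a set $X$ is a map from topologies on $X$ to topologies on $X$ that is monotone for inclusion and sends Noetherian topologies to Noetherian topologies. *)

theory Defs
  imports "HOL-Analysis.Analysis"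
begin

definition spec_le :: "'a topology \<Rightarrow> 'a \<Rightarrow> 'a \<Rightarrow> bool" where
  "spec_le \<theta> x y \<longleftrightarrow> x \<in> \<theta> closure_of {y}"

definition higman_le :: "('a \<Rightarrow> 'a \<Rightarrow> bool) \<Rightarrow> 'a list \<Rightarrow> 'a list \<Rightarrow> bool" where
  "higman_le le u w \<longleftrightarrow>
     (\<exists>h. strict_mono_on {..<length u} h \<and> (\<forall>i<length u. h i < length w \<and> le (u ! i) (w ! h i)))"

definition up_closure :: "('b \<Rightarrow> 'b \<Rightarrow> bool) \<Rightarrow> 'b set \<Rightarrow> 'b set" where
  "up_closure le A = {w. \<exists>u\<in>A. le u w}"

definition concat_lang :: "'a list set \<Rightarrow> 'a list set \<Rightarrow> 'a list set" where
  "concat_lang U V = {u @ v | u v. u \<in> U \<and> v \<in> V}"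

definition noetherian_space :: "'a topology \<Rightarrow> bool" where
  "noetherian_space T \<longleftrightarrow> (\<forall>A. A \<subseteq> topspace T \<longrightarrow> compactin T A)"

definition refinement_function :: "'b set \<Rightarrow> ('b topology \<Rightarrow> 'b topology) \<Rightarrow> bool" where
  "refinement_function X F \<longleftrightarrow>
     (\<forall>\<tau>. topspace \<tau> = X \<longrightarrow> topspace (F \<tau>) = X) \<and>
     (\<forall>\<tau> \<tau>'. topspace \<tau> = X \<and> topspace \<tau>' = X \<and> (\<forall>U. openin \<tau> U \<longrightarrow> openin \<tau>' U)
         \<longrightarrow> (\<forall>U. openin (F \<tau>) U \<longrightarrow> openin (F \<tau>') U)) \<and>
     (\<forall>\<tau>. topspace \<tau> = X \<and> noetherian_space \<tau> \<longrightarrow> noetherian_space (F \<tau>))"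

text \<open>The map S of the statement; the whole space is included among the generators
  (standard subbasis convention).\<close>
definition word_refine :: "'a topology \<Rightarrow> 'a list topology \<Rightarrow> 'a list topology" where
  "word_refine \<theta> \<tau> = topology_generated_by
     (insert UNIV
       ({up_closure (higman_le (spec_le \<theta>)) (concat_lang U V) | U V. openin \<tau> U \<and> openin \<tau> V} \<union>
        {up_closure (higman_le (spec_le \<theta>)) ((\<lambda>a. [a]) ` W) | W. openin \<theta> W}))"

end

theory Submission
  imports Defs
begin

lemma fin_int_eq:
  assumes "UNIV \<in> B"
  shows "finite intersection_of (\<lambda>x. x \<in> B) = finite' intersection_of (\<lambda>x. x \<in> B)"
proof (intro ext iffI)
  fix S assume "(finite intersection_of (\<lambda>x. x \<in> B)) S"
  then obtain U where U: "finite U" "U \<subseteq> B" "\<Inter>U = S" unfolding intersection_of_def by auto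
  show "(finite' intersection_of (\<lambda>x. x \<in> B)) S"
  proof (cases "U = {}")
    case True
    then show ?thesis using U assms unfolding intersection_of_def
      by (intro exI[of _ "{UNIV}"]) auto
  next
    case False
    then show ?thesis using U unfolding intersection_of_def by auto
  qed
next
  fix S assume "(finite' intersection_of (\<lambda>x. x \<in> B)) S"
  then show "(finite intersection_of (\<lambda>x. x \<in> B)) S" unfolding intersection_of_def by auto
qed

lemma subbase_noetherian:
  assumes U: "UNIV \<in> B"
    and fin: "\<And>C. C \<subseteq> B \<Longrightarrow> \<exists>C'. finite C' \<and> C' \<subseteq> C \<and> \<Union>C \<subseteq> \<Union>C'"
  shows "noetherian_space (topology_generated_by B)"
  unfolding noetherian_space_def
proof (intro allI impI)
  fix A assume "A \<subseteq> topspace (topology_generated_by B)"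
  let ?X = "subtopology (topology_generated_by B) A"
  have op: "openin (topology_generated_by B) = arbitrary union_of finite' intersection_of (\<lambda>x. x \<in> B)"
  proof -
    have "openin (topology_generated_by B) = generate_topology_on B"
      by (intro ext) (rule openin_topology_generated_by_iff)
    then show ?thesis by (simp only: generate_topology_on_eq)
  qed
  have "?X = topology (openin ?X)" by (rule openin_inverse[symmetric])
  also have "openin ?X = openin (topology_generated_by B) relative_to A"
    by (rule openin_relative_to[symmetric])
  also have "\<dots> = arbitrary union_of (finite intersection_of (\<lambda>x. x \<in> B) relative_to A)"
    unfolding op arbitrary_union_of_relative_to fin_int_eq[OF U] ..
  finally have eq0: "?X = topology (arbitrary union_of (finite intersection_of (\<lambda>x. x \<in> B) relative_to A))" .
  note eq = eq0[symmetric]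
  have "compact_space ?X"
  proof (rule Alexander_subbase_alt[OF _ _ eq])
    show "A \<subseteq> \<Union>B" using U by blast
  next
    fix C assume "C \<subseteq> B" "A \<subseteq> \<Union>C"
    obtain C' where "finite C'" "C' \<subseteq> C" "\<Union>C \<subseteq> \<Union>C'" using fin[OF \<open>C \<subseteq> B\<close>] by metis
    moreover have "A \<subseteq> \<Union>C'" using \<open>A \<subseteq> \<Union>C\<close> \<open>\<Union>C \<subseteq> \<Union>C'\<close> by (rule order_trans)
    ultimately show "\<exists>C'. finite C' \<and> C' \<subseteq> C \<and> A \<subseteq> \<Union>C'" by (intro exI[of _ C'] conjI)
  qed
  then show "compactin (topology_generated_by B) A"
    unfolding compactin_subspace using \<open>A \<subseteq> _\<close> by (intro conjI)
qed


lemma noeth_cover: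
  assumes "noetherian_space X" "\<And>W. W \<in> \<W> \<Longrightarrow> openin X W"
  shows "\<exists>\<W>'. finite \<W>' \<and> \<W>' \<subseteq> \<W> \<and> \<Union>\<W> \<subseteq> \<Union>\<W>'"
proof -
  have "\<Union>\<W> \<subseteq> topspace X" using assms(2) openin_subset by blast
  then have "compactin X (\<Union>\<W>)" using assms(1) unfolding noetherian_space_def by simp
  then have "(\<forall>U \<in> \<W>. openin X U) \<and> \<Union>\<W> \<subseteq> \<Union>\<W> \<longrightarrow> (\<exists>\<F>. finite \<F> \<and> \<F> \<subseteq> \<W> \<and> \<Union>\<W> \<subseteq> \<Union>\<F>)"
    unfolding compactin_def by (elim conjE allE)
  then show ?thesis using assms(2) by simp
qed

lemma prod_noeth_cover:
  fixes \<tau> :: "'b topology"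
  assumes N: "noetherian_space \<tau>"
    and P: "\<And>U V. (U, V) \<in> P \<Longrightarrow> openin \<tau> U \<and> openin \<tau> V"
  shows "\<exists>P'. finite P' \<and> P' \<subseteq> P \<and> (\<Union>(U,V)\<in>P. U \<times> V) \<subseteq> (\<Union>(U,V)\<in>P'. U \<times> V)"
proof -
  define B where "B = insert UNIV ({U \<times> UNIV | U. openin \<tau> U} \<union> {UNIV \<times> V | V. openin \<tau> V})"
  have "noetherian_space (topology_generated_by B)"
  proof (rule subbase_noetherian)
    show "UNIV \<in> B" unfolding B_def by blast
  next
    fix C assume C: "C \<subseteq> B"
    show "\<exists>C'. finite C' \<and> C' \<subseteq> C \<and> \<Union>C \<subseteq> \<Union>C'"
    proof (cases "UNIV \<in> C")
      case True
      then show ?thesis by (intro exI[of _ "{UNIV}"]) auto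
    next
      case False
      define \<U> where "\<U> = {U. openin \<tau> U \<and> U \<times> UNIV \<in> C}"
      define \<V> where "\<V> = {V. openin \<tau> V \<and> UNIV \<times> V \<in> C}"
      have "\<And>W. W \<in> \<U> \<Longrightarrow> openin \<tau> W" by (simp add: \<U>_def)
      then obtain \<U>' where U': "finite \<U>'" "\<U>' \<subseteq> \<U>" "\<Union>\<U> \<subseteq> \<Union>\<U>'"
        using noeth_cover[OF N] by metis
      have "\<And>W. W \<in> \<V> \<Longrightarrow> openin \<tau> W" by (simp add: \<V>_def)
      then obtain \<V>' where V': "finite \<V>'" "\<V>' \<subseteq> \<V>" "\<Union>\<V> \<subseteq> \<Union>\<V>'"
        using noeth_cover[OF N] by metis
      define C' where "C' = (\<lambda>U. U \<times> (UNIV::'b set)) ` \<U>' \<union> (\<lambda>V. (UNIV::'b set) \<times> V) ` \<V>'"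
      have "finite C'" unfolding C'_def using U' V' by auto
      moreover have "C' \<subseteq> C" unfolding C'_def using U'(2) V'(2) unfolding \<U>_def \<V>_def by auto
      moreover have "\<Union>C \<subseteq> \<Union>C'"
      proof
        fix x assume "x \<in> \<Union>C"
        then obtain X where X: "X \<in> C" "x \<in> X" by blast
        have "X \<in> B" using C X(1) by blast
        moreover have "X \<noteq> UNIV" using False X(1) by blast
        ultimately have "X \<in> {U \<times> UNIV | U. openin \<tau> U} \<union> {UNIV \<times> V | V. openin \<tau> V}"
          unfolding B_def by simp
        then show "x \<in> \<Union>C'"
        proof
          assume "X \<in> {U \<times> UNIV | U. openin \<tau> U}"
          then obtain U where "X = U \<times> UNIV" "openin \<tau> U" by blast
          then have XU: "X = U \<times> UNIV" "openin \<tau> U" by auto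
          then have "U \<in> \<U>" using X(1) by (simp add: \<U>_def)
          moreover have "fst x \<in> U" using X(2) XU(1) by (cases x) auto
          ultimately have "fst x \<in> \<Union>\<U>'" using U'(3) by (meson UnionI subsetD)
          then obtain U2 where "U2 \<in> \<U>'" "fst x \<in> U2" by (rule UnionE)
          then show ?thesis unfolding C'_def by (cases x) auto
        next
          assume "X \<in> {UNIV \<times> V | V. openin \<tau> V}"
          then obtain V where "X = UNIV \<times> V" "openin \<tau> V" by blast
          then have XU: "X = UNIV \<times> V" "openin \<tau> V" by auto
          then have "V \<in> \<V>" using X(1) by (simp add: \<V>_def)
          moreover have "snd x \<in> V" using X(2) XU(1) by (cases x) auto
          ultimately have "snd x \<in> \<Union>\<V>'" using V'(3) by (meson UnionI subsetD)
          then obtain V2 where "V2 \<in> \<V>'" "snd x \<in> V2" by (rule UnionE)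
          then show ?thesis unfolding C'_def by (cases x) auto
        qed
      qed
      ultimately show ?thesis by (intro exI[of _ C'] conjI)
    qed
  qed
  moreover have opn: "openin (topology_generated_by B) (U \<times> V)" if "(U, V) \<in> P" for U V
  proof -
    have "U \<times> V = (U \<times> UNIV) \<inter> (UNIV \<times> V)" by auto
    moreover have "openin (topology_generated_by B) (U \<times> UNIV)" "openin (topology_generated_by B) (UNIV \<times> V)"
      using P[OF that] unfolding B_def by (auto intro!: topology_generated_by_Basis)
    ultimately show ?thesis by (metis openin_Int)
  qed
  moreover have "\<And>W. W \<in> (\<lambda>(U,V). U \<times> V) ` P \<Longrightarrow> openin (topology_generated_by B) W"
    using opn by auto
  ultimately obtain F where F: "finite F" "F \<subseteq> (\<lambda>(U,V). U \<times> V) ` P" "\<Union>((\<lambda>(U,V). U \<times> V) ` P) \<subseteq> \<Union>F"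
    by (metis noeth_cover)
  obtain P' where "P' \<subseteq> P" "finite P'" "F = (\<lambda>(U,V). U \<times> V) ` P'"
    using finite_subset_image[OF F(1,2)] by metis
  then show ?thesis using F(3) by auto
qed


lemma gen_mono:
  assumes "generate_topology_on S U" "S \<subseteq> S'"
  shows "generate_topology_on S' U"
  using assms(1)
proof induction
  case Empty then show ?case by (rule generate_topology_on.Empty)
next
  case (Int a b) then show ?case by (simp add: generate_topology_on.Int)
next
  case (UN K) then show ?case by (simp add: generate_topology_on.UN)
next
  case (Basis s) then show ?case using assms(2) by (intro generate_topology_on.Basis) blast
qed

theorem mainTheorem11:
  fixes \<theta> :: "'a topology"
  assumes "topspace \<theta> = UNIV"
    and "noetherian_space \<theta>"
  shows "refinement_function (UNIV :: 'a list set) (word_refine \<theta>)"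
proof -
  let ?up = "up_closure (higman_le (spec_le \<theta>))"
  let ?s = "\<lambda>a::'a. [a]"
  define G where "G = (\<lambda>\<tau>::'a list topology. {?up (concat_lang U V) | U V. openin \<tau> U \<and> openin \<tau> V})"
  define H where "H = {?up (?s ` W) | W. openin \<theta> W}"
  have wr: "word_refine \<theta> \<tau> = topology_generated_by (insert UNIV (G \<tau> \<union> H))" for \<tau>
    unfolding word_refine_def G_def H_def ..
  have T1: "\<forall>\<tau>. topspace \<tau> = (UNIV :: 'a list set) \<longrightarrow> topspace (word_refine \<theta> \<tau>) = UNIV"
    unfolding wr topology_generated_by_topspace by auto
  have T2: "\<forall>\<tau> \<tau>'. topspace \<tau> = (UNIV :: 'a list set) \<and> topspace \<tau>' = UNIV \<and> (\<forall>U. openin \<tau> U \<longrightarrow> openin \<tau>' U)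
         \<longrightarrow> (\<forall>U. openin (word_refine \<theta> \<tau>) U \<longrightarrow> openin (word_refine \<theta> \<tau>') U)"
  proof (intro allI impI)
    fix \<tau> \<tau>' :: "'a list topology" and U
    assume a: "topspace \<tau> = UNIV \<and> topspace \<tau>' = UNIV \<and> (\<forall>U. openin \<tau> U \<longrightarrow> openin \<tau>' U)"
      and o: "openin (word_refine \<theta> \<tau>) U"
    have "G \<tau> \<subseteq> G \<tau>'" unfolding G_def using a by blast
    then have sub: "insert UNIV (G \<tau> \<union> H) \<subseteq> insert UNIV (G \<tau>' \<union> H)" by blast
    show "openin (word_refine \<theta> \<tau>') U"
      using o unfolding wr openin_topology_generated_by_iff using sub by (rule gen_mono)
  qed
  have T3: "\<forall>\<tau>. topspace \<tau> = (UNIV :: 'a list set) \<and> noetherian_space \<tau> \<longrightarrow> noetherian_space (word_refine \<theta> \<tau>)"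
  proof (intro allI impI)
    fix \<tau> :: "'a list topology"
    assume a: "topspace \<tau> = UNIV \<and> noetherian_space \<tau>"
    show "noetherian_space (word_refine \<theta> \<tau>)"
      unfolding wr
    proof (rule subbase_noetherian)
      show "UNIV \<in> insert UNIV (G \<tau> \<union> H)" by simp
    next
      fix C assume C: "C \<subseteq> insert UNIV (G \<tau> \<union> H)"
      show "\<exists>C'. finite C' \<and> C' \<subseteq> C \<and> \<Union>C \<subseteq> \<Union>C'"
      proof (cases "UNIV \<in> C")
        case True
        then show ?thesis by (intro exI[of _ "{UNIV}"]) auto
      next
        case False
        define P where "P = {(U,V). openin \<tau> U \<and> openin \<tau> V \<and> ?up (concat_lang U V) \<in> C}"
        define \<W> where "\<W> = {W. openin \<theta> W \<and> ?up (?s ` W) \<in> C}"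
        have "\<And>U V. (U, V) \<in> P \<Longrightarrow> openin \<tau> U \<and> openin \<tau> V" by (simp add: P_def)
        then obtain P' where P': "finite P'" "P' \<subseteq> P" "(\<Union>(U,V)\<in>P. U \<times> V) \<subseteq> (\<Union>(U,V)\<in>P'. U \<times> V)"
          using prod_noeth_cover[of \<tau> P] a by metis
        have "\<And>W. W \<in> \<W> \<Longrightarrow> openin \<theta> W" by (simp add: \<W>_def)
        then obtain \<W>' where W': "finite \<W>'" "\<W>' \<subseteq> \<W>" "\<Union>\<W> \<subseteq> \<Union>\<W>'"
          using noeth_cover[OF assms(2)] by metis
        define C' where "C' = (\<lambda>(U,V). ?up (concat_lang U V)) ` P' \<union> (\<lambda>W. ?up (?s ` W)) ` \<W>'"
        have "finite C'" unfolding C'_def using P'(1) W'(1) by simp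
        moreover have "C' \<subseteq> C" unfolding C'_def using P'(2) W'(2) unfolding P_def \<W>_def by auto
        moreover have "\<Union>C \<subseteq> \<Union>C'"
        proof
          fix x assume "x \<in> \<Union>C"
          then obtain X where X: "X \<in> C" "x \<in> X" by (rule UnionE)
          have "X \<in> insert UNIV (G \<tau> \<union> H)" using C X(1) by (rule subsetD)
          moreover have "X \<noteq> UNIV" using False X(1) by metis
          ultimately have "X \<in> G \<tau> \<or> X \<in> H" by simp
          then show "x \<in> \<Union>C'"
          proof
            assume "X \<in> G \<tau>"
            then obtain U V where UV: "X = ?up (concat_lang U V)" "openin \<tau> U" "openin \<tau> V"
              unfolding G_def by blast
            then have "(U, V) \<in> P" using X(1) by (simp add: P_def)
            from X(2) UV(1) obtain z where z: "z \<in> concat_lang U V" "higman_le (spec_le \<theta>) z x"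
              unfolding up_closure_def by blast
            then obtain u v where uv: "z = u @ v" "u \<in> U" "v \<in> V" unfolding concat_lang_def by blast
            have "(u, v) \<in> (\<Union>(U,V)\<in>P. U \<times> V)" using \<open>(U, V) \<in> P\<close> uv by blast
            then have "(u, v) \<in> (\<Union>(U,V)\<in>P'. U \<times> V)" using P'(3) by (meson subsetD)
            then obtain U2 V2 where U2: "(U2, V2) \<in> P'" "u \<in> U2" "v \<in> V2" by blast
            have "z \<in> concat_lang U2 V2" unfolding concat_lang_def using uv U2 by blast
            then have "x \<in> ?up (concat_lang U2 V2)" unfolding up_closure_def using z(2) by blast
            moreover have "?up (concat_lang U2 V2) \<in> C'" unfolding C'_def using U2(1) by force
            ultimately show ?thesis by (rule UnionI[rotated])
          next
            assume "X \<in> H"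
            then obtain W where WW: "X = ?up (?s ` W)" "openin \<theta> W"
              unfolding H_def by blast
            then have "W \<in> \<W>" using X(1) by (simp add: \<W>_def)
            from X(2) WW(1) obtain z where z: "z \<in> ?s ` W" "higman_le (spec_le \<theta>) z x"
              unfolding up_closure_def by blast
            then obtain c where c: "z = [c]" "c \<in> W" by blast
            have "c \<in> \<Union>\<W>" using \<open>W \<in> \<W>\<close> c(2) by (rule UnionI)
            then have "c \<in> \<Union>\<W>'" using W'(3) by (meson subsetD)
            then obtain W2 where W2: "W2 \<in> \<W>'" "c \<in> W2" by (rule UnionE)
            have "z \<in> ?s ` W2" using c(1) W2(2) by blast
            then have "x \<in> ?up (?s ` W2)" unfolding up_closure_def using z(2) by blast
            moreover have "?up (?s ` W2) \<in> C'" unfolding C'_def using W2(1) by blast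
            ultimately show ?thesis by (rule UnionI[rotated])
          qed
        qed
        ultimately show ?thesis by (intro exI[of _ C'] conjI)
      qed
    qed
  qed
  show ?thesis unfolding refinement_function_def using T1 T2 T3 by (intro conjI)
qed

end
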